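(* Let the problem data, partition, residuals, augmented Lagrangian and primal updates be as described in the context, and let $\{\mu^{c,k}_i\}_{k\ge 0}$, $c\in\mathcal{C}$, $i=1,\dots,N$, be arbitrary dual sequences with $\mu^{F,k}_i\ge 0$ componentwise for all $k$. Let the primal sequences $\{X^k_i, Z^k, Y^{c,k}_i\}$ be generated by the updates (U1)–(U3) from arbitrary initial values $X^0_i\in[-u,u]$, $Z^0\in[-u,u]$, $Y^{c,0}_i\in[0,u^c_{Y_i}]$. Then for every $k\ge 0$, $$ L^k\;\ge\; L^{k+1}+D^k+P^k+\sum_{i=1}^N\sum_{l=1}^M\Big({}^{1}\sigma^k_{i,l}\,\|X^k_{i,l}-X^{k+1}_{i,l}\|_1+U^k_{i,l}\Big), $$ where $$ L^k:=\sum_{i=1}^N L_i\big(X^k_i,Z^k,(Y^{c,k}_i)_c,(\mu^{c,k}_i)_c\big),\qquad D^k:=\sum_{i=1}^N\sum_{c\in\mathcal C}\big\langle \mu^{c,k}_i-\mu^{c,k+1}_i,\ r^{c,k+1}_i\big\rangle, $$ with $r^{c,k+1}_i:=r^c_i(X^{k+1}_i,Z^{k+1},Y^{c,k+1}_i)$; $$ P^k:=\sum_{i=1}^N\Big[\sum_{l}{}^{2}\sigma^k_{i,l}\|X^{k+1}_{i,l}-X^k_{i,l}\|^2+\rho_i\|X^{k+1}_i-X^k_i\|^2+(\tau^k+\rho_i)\|Z^{k+1}-Z^k\|^2+\sum_{c\in\mathcal C}\Big(\gamma^{c,k}_i+\tfrac{\rho_i}{2}\Big)\|Y^{c,k+1}_i-Y^{c,k}_i\|^2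 $$ $$ \qquad+\tfrac{\rho_i}{2}\sum_{l}\Big(\|F_i(X^{k+1,k+1}_{i,l})-F_i(X^{k+1,k}_{i,l})\|^2+\|G_{i,l}(X^{k+1}_{i,l}-X^k_{i,l})\|^2+2\|H_{i,l}(X^{k+1}_{i,l}-X^k_{i,l})\|^2\Big)\Big]; $$ and $$ U^k_{i,l}:=\Big\langle \mu^{F,k}_i+\rho_i\big(F_i(X^{k+1,k+1}_{i,l})+Y^{F,k}_i\big),\ F_i(X^{k+1,k}_{i,l})-F_i(X^{k+1,k+1}_{i,l})-\big(\nabla_{X_{i,l}}F_i(X^{k+1,k+1}_{i,l})\big)^{\!T}\!\!\cdot(X^k_{i,l}-X^{k+1}_{i,l})\Big\rangle, $$ where the last product denotes the vector whose $j$-th entry is $(X^k_{i,l}-X^{k+1}_{i,l})^T\nabla_{X_{i,l}}(F_i)_j(X^{k+1,k+1}_{i,l})$.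
   Context: Problem data. $n,N,M\in\mathbb N$. $u\in\mathbb R^n$ with $u>0$. $f(Z)=\langle f_0,Z\rangle$ is linear on $\mathbb R^n$. For each $i=1,\dots,N$: $F_i:\mathbb R^n\to\mathbb R^{p_i}$ has convex quadratic components (each component of the form $a(Z)+c(Z)^2$ or $c(Z)^2-a(Z)b(Z)$ with $a,b,c$ affine, convex on $[-u,u]$); $G_i:\mathbb R^n\to\mathbb R^{q_i}$ and $H_i:\mathbb R^n\to\mathbb R^{s_i}$ are affine. Vectors in $\mathbb R^n$ are partitioned into $M$ disjoint subvectors $Z=(Z_1,\dots,Z_M)$, $Z_l\in\mathbb R^{m_l}$, $\sum_l m_l=n$, the same partition for every $X_i\in\mathbb R^n$; correspondingly $u=(u_1,\dots,u_M)$, $f(Z)=\sum_l\langle f_l,Z_l\rangle$, $G_i(Z)=\sum_l G_{i,l}Z_l+G_{i,0}$, $H_i(Z)=\sum_l H_{i,l}Z_l+H_{i,0}$ with matrices $G_{i,l},H_{i,l}$. Slack variables and residuals. Let $\mathcal C=\{pX,nX,F,G,pH,nH\}$. For each $i$ there are slack vectors $Y^{pX}_i,Y^{nX}_i\in\mathbb R^n$, $Y^F_i\in\mathbb R^{p_i}$, $Y^G_i\in\mathbb R^{q_i}$, $Y^{pH}_i,Y^{nH}_i\in\mathbb R^{s_i}$, with given positive upper bound vectors $u^c_{Y_i}$ (slack boxes $[0,u^c_{Y_i}]$), and dual vectors $\mu^c_i$ of the same sizes. Residuals: $r^{pX}_i=X_i-Z+Y^{pX}_i$, $r^{nX}_i=Z-X_i+Y^{nX}_i$,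 $r^F_i=F_i(X_i)+Y^F_i$, $r^G_i=G_i(X_i)+Y^G_i$, $r^{pH}_i=H_i(X_i)+Y^{pH}_i$, $r^{nH}_i=-H_i(X_i)+Y^{nH}_i$. With $\rho_i>0$, the augmented Lagrangian of block $i$ is $$L_i=f(X_i)+\sum_{c\in\mathcal C}\langle\mu^c_i,r^c_i\rangle+\frac{\rho_i}{2}\sum_{c\in\mathcal C}\|r^c_i\|^2.$$ Gauss–Seidel notation: $X^{k+1,k}_{i,l}:=(X^{k+1}_{i,1},\dots,X^{k+1}_{i,l-1},X^k_{i,l},X^k_{i,l+1},\dots,X^k_{i,M})$ and $X^{k+1,k+1}_{i,l}:=(X^{k+1}_{i,1},\dots,X^{k+1}_{i,l},X^k_{i,l+1},\dots,X^k_{i,M})$. Parameters: ${}^{1}\sigma^k_{i,l}\ge0$, ${}^{2}\sigma^k_{i,l}>0$, $\tau^k>0$, $\gamma^{c,k}_i>0$. Updates at iteration $k$ (for each $i$): (U1) For $l=1,\dots,M$ in order, $X^{k+1}_{i,l}$ is the minimizer over $X_{i,l}\in[-u_l,u_l]$ of $L_i\big((X^{k+1}_{i,1},\dots,X^{k+1}_{i,l-1},X_{i,l},X^k_{i,l+1},\dots,X^k_{i,M}),Z^k,(Y^{c,k}_i)_c,(\mu^{c,k}_i)_c\big)+{}^{1}\sigma^k_{i,l}\|X_{i,l}-X^k_{i,l}\|_1+\tfrac{{}^{2}\sigma^k_{i,l}}{2}\|X_{i,l}-X^k_{i,l}\|^2$. (U2) $Z^{k+1}$ is the minimizer over $Z\in[-u,u]$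 of $\sum_{i=1}^N\Big(\langle\mu^{pX,k}_i,X^{k+1}_i-Z+Y^{pX,k}_i\rangle+\langle\mu^{nX,k}_i,Z-X^{k+1}_i+Y^{nX,k}_i\rangle+\tfrac{\rho_i}{2}\big(\|X^{k+1}_i-Z+Y^{pX,k}_i\|^2+\|Z-X^{k+1}_i+Y^{nX,k}_i\|^2\big)+\tfrac{\tau^k}{2}\|Z-Z^k\|^2\Big)$. (U3) For each $c\in\mathcal C$, $Y^{c,k+1}_i$ is the minimizer over $Y\in[0,u^c_{Y_i}]$ of $\langle\mu^{c,k}_i,r^c_i(X^{k+1}_i,Z^{k+1},Y)\rangle+\tfrac{\rho_i}{2}\|r^c_i(X^{k+1}_i,Z^{k+1},Y)\|^2+\tfrac{\gamma^{c,k}_i}{2}\|Y-Y^{c,k}_i\|^2$, where $r^c_i(X_i,Z,Y)$ denotes the residual $r^c_i$ with $Y^c_i=Y$. *)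

theory Defs
  imports "HOL-Analysis.Analysis"
begin

text \<open>Vectors of R^d are represented as functions nat => real; only the
components 0..d-1 are meaningful.\<close>

definition ip :: "nat \<Rightarrow> (nat \<Rightarrow> real) \<Rightarrow> (nat \<Rightarrow> real) \<Rightarrow> real" where
  "ip d a b = (\<Sum>j<d. a j * b j)"

definition sqn :: "nat \<Rightarrow> (nat \<Rightarrow> real) \<Rightarrow> real" where
  "sqn d a = ip d a a"

definition sqn_on :: "nat set \<Rightarrow> (nat \<Rightarrow> real) \<Rightarrow> real" where
  "sqn_on S a = (\<Sum>j\<in>S. (a j)^2)"

definition norm1_on :: "nat set \<Rightarrow> (nat \<Rightarrow> real) \<Rightarrow> real" where
  "norm1_on S a = (\<Sum>j\<in>S. \<bar>a j\<bar>)"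

definition vdiff :: "(nat \<Rightarrow> real) \<Rightarrow> (nat \<Rightarrow> real) \<Rightarrow> (nat \<Rightarrow> real)" where
  "vdiff a b = (\<lambda>j. a j - b j)"

definition inbox :: "nat \<Rightarrow> (nat \<Rightarrow> real) \<Rightarrow> (nat \<Rightarrow> real) \<Rightarrow> (nat \<Rightarrow> real) \<Rightarrow> bool" where
  "inbox d lo hi x \<longleftrightarrow> (\<forall>j<d. lo j \<le> x j \<and> x j \<le> hi j)"

definition affine_fn :: "nat \<Rightarrow> ((nat \<Rightarrow> real) \<Rightarrow> real) \<Rightarrow> bool" where
  "affine_fn n a \<longleftrightarrow> (\<exists>w b. \<forall>x. a x = (\<Sum>j<n. w j * x j) + b)"

definition quad_form :: "nat \<Rightarrow> ((nat \<Rightarrow> real) \<Rightarrow> real) \<Rightarrow> bool" where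
  "quad_form n g \<longleftrightarrow> (\<exists>a b c. affine_fn n a \<and> affine_fn n b \<and> affine_fn n c \<and>
      ((\<forall>x. g x = a x + (c x)^2) \<or> (\<forall>x. g x = (c x)^2 - a x * b x)))"

definition convex_on_box :: "nat \<Rightarrow> (nat \<Rightarrow> real) \<Rightarrow> ((nat \<Rightarrow> real) \<Rightarrow> real) \<Rightarrow> bool" where
  "convex_on_box n u g \<longleftrightarrow> (\<forall>x y t. inbox n (\<lambda>j. - u j) u x \<longrightarrow> inbox n (\<lambda>j. - u j) u y
      \<longrightarrow> 0 \<le> t \<longrightarrow> t \<le> 1 \<longrightarrow>
      g (\<lambda>j. t * x j + (1 - t) * y j) \<le> t * g x + (1 - t) * g y)"

definition affmap :: "nat \<Rightarrow> (nat \<Rightarrow> nat \<Rightarrow> real) \<Rightarrow> (nat \<Rightarrow> real) \<Rightarrow> (nat \<Rightarrow> real) \<Rightarrow> (nat \<Rightarrow> real)" where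
  "affmap n A b X = (\<lambda>j. (\<Sum>t<n. A j t * X t) + b j)"

definition blockmap :: "(nat \<Rightarrow> nat \<Rightarrow> real) \<Rightarrow> nat set \<Rightarrow> (nat \<Rightarrow> real) \<Rightarrow> (nat \<Rightarrow> real)" where
  "blockmap A S d = (\<lambda>j. (\<Sum>t\<in>S. A j t * d t))"

text \<open>Directional derivative: for differentiable g, dirderiv g x d = d^T grad g(x).
  With d supported on block l this is d_l^T grad_{X_l} g(x).\<close>
definition dirderiv :: "((nat \<Rightarrow> real) \<Rightarrow> real) \<Rightarrow> (nat \<Rightarrow> real) \<Rightarrow> (nat \<Rightarrow> real) \<Rightarrow> real" where
  "dirderiv g x d = deriv (\<lambda>t. g (\<lambda>j. x j + t * d j)) 0"

datatype cls = PX | NX | CF | CG | PH | NH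

definition allC :: "cls set" where
  "allC = {PX, NX, CF, CG, PH, NH}"

fun cdim :: "nat \<Rightarrow> nat \<Rightarrow> nat \<Rightarrow> nat \<Rightarrow> cls \<Rightarrow> nat" where
  "cdim n p q s PX = n"
| "cdim n p q s NX = n"
| "cdim n p q s CF = p"
| "cdim n p q s CG = q"
| "cdim n p q s PH = s"
| "cdim n p q s NH = s"

fun resid :: "((nat \<Rightarrow> real) \<Rightarrow> (nat \<Rightarrow> real)) \<Rightarrow> ((nat \<Rightarrow> real) \<Rightarrow> (nat \<Rightarrow> real)) \<Rightarrow>
    ((nat \<Rightarrow> real) \<Rightarrow> (nat \<Rightarrow> real)) \<Rightarrow> cls \<Rightarrow>
    (nat \<Rightarrow> real) \<Rightarrow> (nat \<Rightarrow> real) \<Rightarrow> (nat \<Rightarrow> real) \<Rightarrow> (nat \<Rightarrow> real)" where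
  "resid Fi Gi Hi PX X Z Y = (\<lambda>j. X j - Z j + Y j)"
| "resid Fi Gi Hi NX X Z Y = (\<lambda>j. Z j - X j + Y j)"
| "resid Fi Gi Hi CF X Z Y = (\<lambda>j. Fi X j + Y j)"
| "resid Fi Gi Hi CG X Z Y = (\<lambda>j. Gi X j + Y j)"
| "resid Fi Gi Hi PH X Z Y = (\<lambda>j. Hi X j + Y j)"
| "resid Fi Gi Hi NH X Z Y = (\<lambda>j. - Hi X j + Y j)"

definition augL :: "nat \<Rightarrow> (nat \<Rightarrow> real) \<Rightarrow> (cls \<Rightarrow> nat) \<Rightarrow>
    ((nat \<Rightarrow> real) \<Rightarrow> (nat \<Rightarrow> real)) \<Rightarrow> ((nat \<Rightarrow> real) \<Rightarrow> (nat \<Rightarrow> real)) \<Rightarrow>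
    ((nat \<Rightarrow> real) \<Rightarrow> (nat \<Rightarrow> real)) \<Rightarrow> real \<Rightarrow>
    (nat \<Rightarrow> real) \<Rightarrow> (nat \<Rightarrow> real) \<Rightarrow> (cls \<Rightarrow> nat \<Rightarrow> real) \<Rightarrow> (cls \<Rightarrow> nat \<Rightarrow> real) \<Rightarrow> real" where
  "augL n f0 dims Fi Gi Hi rho X Z Y mu =
     ip n f0 X + (\<Sum>c\<in>allC. ip (dims c) (mu c) (resid Fi Gi Hi c X Z (Y c)))
     + rho / 2 * (\<Sum>c\<in>allC. sqn (dims c) (resid Fi Gi Hi c X Z (Y c)))"

definition gs_prev :: "(nat \<Rightarrow> nat set) \<Rightarrow> nat \<Rightarrow> (nat \<Rightarrow> real) \<Rightarrow> (nat \<Rightarrow> real) \<Rightarrow> (nat \<Rightarrow> real)" where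
  "gs_prev B l Xnew Xold = (\<lambda>j. if j \<in> (\<Union>l'\<in>{1..<l}. B l') then Xnew j else Xold j)"

definition gs_cur :: "(nat \<Rightarrow> nat set) \<Rightarrow> nat \<Rightarrow> (nat \<Rightarrow> real) \<Rightarrow> (nat \<Rightarrow> real) \<Rightarrow> (nat \<Rightarrow> real)" where
  "gs_cur B l Xnew Xold = (\<lambda>j. if j \<in> (\<Union>l'\<in>{1..l}. B l') then Xnew j else Xold j)"

definition blk_upd :: "(nat \<Rightarrow> nat set) \<Rightarrow> nat \<Rightarrow> (nat \<Rightarrow> real) \<Rightarrow> (nat \<Rightarrow> real) \<Rightarrow> (nat \<Rightarrow> real)" where
  "blk_upd B l base V = (\<lambda>j. if j \<in> B l then V j else base j)"

definition restr :: "nat set \<Rightarrow> (nat \<Rightarrow> real) \<Rightarrow> (nat \<Rightarrow> real)" where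
  "restr S d = (\<lambda>j. if j \<in> S then d j else 0)"

end

theory Submission
  imports Defs
begin


definition EE :: "nat \<Rightarrow> (nat \<Rightarrow> real) \<Rightarrow> real \<Rightarrow> (nat \<Rightarrow> real) \<Rightarrow> real" where
  "EE d m r v = ip d m v + r / 2 * sqn d v"

lemma ip_cong: "(\<And>j. j < d \<Longrightarrow> a j = a' j) \<Longrightarrow> (\<And>j. j < d \<Longrightarrow> b j = b' j) \<Longrightarrow> ip d a b = ip d a' b'"
  unfolding ip_def by (intro sum.cong) auto

lemma sqn_cong: "(\<And>j. j < d \<Longrightarrow> a j = a' j) \<Longrightarrow> sqn d a = sqn d a'"
  unfolding sqn_def by (rule ip_cong) auto

lemma sqn_nonneg: "0 \<le> sqn d a"
  unfolding sqn_def ip_def by (intro sum_nonneg) auto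

lemma sqn_neg: "sqn d (\<lambda>j. - a j) = sqn d a"
  unfolding sqn_def ip_def by simp

lemma sqn_vdiff_sym: "sqn d (vdiff a b) = sqn d (vdiff b a)"
  unfolding sqn_def ip_def vdiff_def by (intro sum.cong) (auto simp: algebra_simps)

lemma ip_zero: "ip d m (\<lambda>_. 0) = 0"
  unfolding ip_def by simp

lemma ip_line:
  assumes "\<And>j. j < d \<Longrightarrow> v j = a j + t * b j"
  shows "ip d m v = ip d m a + t * ip d m b"
proof -
  have "ip d m v = (\<Sum>j<d. m j * a j + t * (m j * b j))"
    unfolding ip_def by (intro sum.cong) (auto simp: assms algebra_simps)
  then show ?thesis unfolding ip_def by (simp add: sum.distrib sum_distrib_left)
qed

lemma sqn_line:
  assumes "\<And>j. j < d \<Longrightarrow> v j = a j + t * b j"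
  shows "sqn d v = sqn d a + t * (2 * ip d a b) + t^2 * sqn d b"
proof -
  have "sqn d v = (\<Sum>j<d. a j * a j + t * (2 * (a j * b j)) + t^2 * (b j * b j))"
    unfolding sqn_def ip_def by (intro sum.cong) (auto simp: assms algebra_simps power2_eq_square)
  then show ?thesis unfolding sqn_def ip_def by (simp add: sum.distrib sum_distrib_left)
qed

lemma EE_line:
  assumes "\<And>j. j < d \<Longrightarrow> v j = r0 j + t * r1 j + t^2 * r2 j"
  shows "EE d m r v - EE d m r r0 = t * ip d (\<lambda>j. m j + r * r0 j) r1
     + t^2 * (ip d (\<lambda>j. m j + r * r0 j) r2 + r / 2 * sqn d (\<lambda>j. r1 j + t * r2 j))"
proof -
  have v: "\<And>j. j < d \<Longrightarrow> v j = r0 j + t * (r1 j + t * r2 j)"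
    using assms by (simp add: algebra_simps power2_eq_square)
  have 1: "ip d m v = ip d m r0 + t * ip d m (\<lambda>j. r1 j + t * r2 j)" by (rule ip_line[OF v])
  have 2: "sqn d v = sqn d r0 + t * (2 * ip d r0 (\<lambda>j. r1 j + t * r2 j)) + t^2 * sqn d (\<lambda>j. r1 j + t * r2 j)"
    by (rule sqn_line[OF v])
  have 3: "ip d m (\<lambda>j. r1 j + t * r2 j) = ip d m r1 + t * ip d m r2"
    by (rule ip_line) simp
  have 4: "ip d r0 (\<lambda>j. r1 j + t * r2 j) = ip d r0 r1 + t * ip d r0 r2"
    by (rule ip_line) simp
  have 5: "ip d (\<lambda>j. m j + r * r0 j) r1 = ip d m r1 + r * ip d r0 r1"
    unfolding ip_def by (simp add: algebra_simps sum.distrib sum_distrib_left)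
  have 6: "ip d (\<lambda>j. m j + r * r0 j) r2 = ip d m r2 + r * ip d r0 r2"
    unfolding ip_def by (simp add: algebra_simps sum.distrib sum_distrib_left)
  show ?thesis unfolding EE_def 1 2 3 4 5 6
    by (simp add: algebra_simps power2_eq_square)
qed

lemma EE_diff:
  "EE d m r v1 - EE d m r v0 = ip d (\<lambda>j. m j + r * v0 j) (vdiff v1 v0) + r / 2 * sqn d (vdiff v1 v0)"
proof -
  have "EE d m r v1 - EE d m r v0 = 1 * ip d (\<lambda>j. m j + r * v0 j) (vdiff v1 v0)
     + 1^2 * (ip d (\<lambda>j. m j + r * v0 j) (\<lambda>_. 0) + r / 2 * sqn d (\<lambda>j. vdiff v1 v0 j + 1 * 0))"
    by (rule EE_line) (simp add: vdiff_def)
  then show ?thesis by (simp add: ip_zero)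
qed

lemma sqn_bound:
  assumes "0 \<le> t" "t \<le> 1"
  shows "sqn d (\<lambda>j. a j + t * b j) \<le> 2 * sqn d a + 2 * sqn d b"
proof -
  have "\<And>j. (a j + t * b j) * (a j + t * b j) \<le> 2 * (a j * a j) + 2 * (b j * b j)"
  proof -
    fix j
    have "t * t \<le> 1" using assms by (simp add: mult_le_one)
    then have "t * t * (b j * b j) \<le> 1 * (b j * b j)"
      by (intro mult_right_mono) auto
    moreover have "0 \<le> (a j - t * b j) * (a j - t * b j)" by simp
    ultimately show "(a j + t * b j) * (a j + t * b j) \<le> 2 * (a j * a j) + 2 * (b j * b j)"
      by (simp add: algebra_simps)
  qed
  then have "(\<Sum>j<d. (a j + t * b j) * (a j + t * b j)) \<le> (\<Sum>j<d. 2 * (a j * a j) + 2 * (b j * b j))"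
    by (intro sum_mono) auto
  then show ?thesis unfolding sqn_def ip_def
    by (simp add: sum.distrib sum_distrib_left)
qed

lemma poly_lemma:
  fixes K C :: real
  assumes "\<And>t. 0 < t \<Longrightarrow> t \<le> 1 \<Longrightarrow> 0 \<le> t * K + t^2 * C"
  shows "0 \<le> K"
proof (rule ccontr)
  assume "\<not> 0 \<le> K"
  then have K: "K < 0" by simp
  define t where "t = min 1 (- K / (2 * (\<bar>C\<bar> + 1)))"
  have tp: "0 < t" using K unfolding t_def by (simp add: field_simps)
  have t1: "t \<le> 1" unfolding t_def by simp
  have "t \<le> - K / (2 * (\<bar>C\<bar> + 1))" unfolding t_def by simp
  then have "t * (2 * (\<bar>C\<bar> + 1)) \<le> - K" by (simp add: field_simps)
  moreover have "t * (2 * (\<bar>C\<bar> + 1)) = 2 * (t * \<bar>C\<bar>) + 2 * t" by (simp add: algebra_simps)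
  moreover have "0 \<le> t * \<bar>C\<bar>" using tp by simp
  ultimately have "t * \<bar>C\<bar> < - K" using tp by linarith
  moreover have "t * C \<le> t * \<bar>C\<bar>" using tp by (intro mult_left_mono) auto
  ultimately have "K + t * C < 0" by linarith
  then have "t * (K + t * C) < 0" using tp by (simp add: mult_pos_neg)
  moreover have "0 \<le> t * (K + t * C)" using assms[OF tp t1] by (simp add: algebra_simps power2_eq_square)
  ultimately show False by simp
qed

lemma qmin:
  fixes q :: "real \<Rightarrow> real"
  assumes "\<And>t. q t = q 0 + t * A + t^2 * C"
    and "\<And>t. 0 < t \<Longrightarrow> t \<le> 1 \<Longrightarrow> q 0 \<le> q t"
  shows "q 0 + C \<le> q 1"
proof -
  have "0 \<le> A"
  proof (rule poly_lemma[where C = C])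
    fix t :: real assume "0 < t" "t \<le> 1"
    then have "q 0 \<le> q t" by (rule assms(2))
    then show "0 \<le> t * A + t^2 * C" using assms(1)[of t] by simp
  qed
  then show ?thesis using assms(1)[of 1] by simp
qed

lemma deriv_quad:
  fixes h :: "real \<Rightarrow> real"
  assumes "\<And>t. h t = p0 + p1 * t + p2 * t^2"
  shows "deriv h 0 = p1"
proof -
  have "h = (\<lambda>t. p0 + p1 * t + p2 * t^2)" using assms by auto
  moreover have "((\<lambda>t::real. p0 + p1 * t + p2 * t^2) has_real_derivative p1) (at 0)"
    by (auto intro!: derivative_eq_intros)
  ultimately show ?thesis using DERIV_imp_deriv by blast
qed


lemma affine_line:
  assumes "affine_fn n a"
  shows "a (\<lambda>j. x j + t * d j) = a x + t * (a (\<lambda>j. x j + d j) - a x)"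
proof -
  obtain w b where wb: "\<And>x. a x = (\<Sum>j<n. w j * x j) + b" using assms unfolding affine_fn_def by blast
  show ?thesis unfolding wb by (simp add: algebra_simps sum.distrib sum_distrib_left)
qed

lemma affine_cong:
  assumes "affine_fn n a" "\<And>j. j < n \<Longrightarrow> x j = y j"
  shows "a x = a y"
proof -
  obtain w b where wb: "\<And>x. a x = (\<Sum>j<n. w j * x j) + b" using assms unfolding affine_fn_def by blast
  show ?thesis unfolding wb using assms(2) by simp
qed

lemma quad_cong:
  assumes "quad_form n g" "\<And>j. j < n \<Longrightarrow> x j = y j"
  shows "g x = g y"
proof -
  obtain a b c where abc: "affine_fn n a" "affine_fn n b" "affine_fn n c"
    "(\<forall>x. g x = a x + (c x)^2) \<or> (\<forall>x. g x = (c x)^2 - a x * b x)"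
    using assms(1) unfolding quad_form_def by blast
  have "a x = a y" "b x = b y" "c x = c y" using affine_cong[of n _ x y] assms(2) abc by blast+
  then show ?thesis using abc(4) by auto
qed

lemma quad_poly:
  assumes "quad_form n g"
  shows "\<exists>p1 p2. \<forall>t. g (\<lambda>j. x j + t * d j) = g x + p1 * t + p2 * t^2"
proof -
  obtain a b c where abc: "affine_fn n a" "affine_fn n b" "affine_fn n c"
    "(\<forall>x. g x = a x + (c x)^2) \<or> (\<forall>x. g x = (c x)^2 - a x * b x)"
    using assms(1) unfolding quad_form_def by blast
  define al where "al = a (\<lambda>j. x j + d j) - a x"
  define be where "be = b (\<lambda>j. x j + d j) - b x"
  define ga where "ga = c (\<lambda>j. x j + d j) - c x"
  have A: "\<And>t. a (\<lambda>j. x j + t * d j) = a x + t * al" unfolding al_def by (rule affine_line[OF abc(1)])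
  have B: "\<And>t. b (\<lambda>j. x j + t * d j) = b x + t * be" unfolding be_def by (rule affine_line[OF abc(2)])
  have C: "\<And>t. c (\<lambda>j. x j + t * d j) = c x + t * ga" unfolding ga_def by (rule affine_line[OF abc(3)])
  from abc(4) show ?thesis
  proof
    assume h: "\<forall>x. g x = a x + (c x)^2"
    show ?thesis
      by (rule exI[of _ "al + 2 * c x * ga"], rule exI[of _ "ga^2"])
         (simp add: h A C power2_eq_square algebra_simps)
  next
    assume h: "\<forall>x. g x = (c x)^2 - a x * b x"
    show ?thesis
      by (rule exI[of _ "2 * c x * ga - al * b x - a x * be"], rule exI[of _ "ga^2 - al * be"])
         (simp add: h A B C power2_eq_square algebra_simps)
  qed
qed

lemma quad_line:
  assumes "quad_form n g"
  shows "g (\<lambda>j. x j + t * d j) = g x + t * dirderiv g x d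
           + t^2 * (g (\<lambda>j. x j + d j) - g x - dirderiv g x d)"
proof -
  obtain p1 p2 where p: "\<And>t. g (\<lambda>j. x j + t * d j) = g x + p1 * t + p2 * t^2"
    using quad_poly[OF assms] by blast
  have "dirderiv g x d = p1" unfolding dirderiv_def by (rule deriv_quad) (rule p)
  moreover have "g (\<lambda>j. x j + d j) = g x + p1 + p2" using p[of 1] by simp
  ultimately show ?thesis using p[of t] by (simp add: algebra_simps)
qed


lemma sum_allC: "(\<Sum>c\<in>allC. f c) = f PX + f NX + f CF + f CG + f PH + f NH"
  by (simp add: allC_def add.assoc)

lemma augL_EE:
  "augL n f0 dims Fi Gi Hi r X Z Y mu = ip n f0 X + (\<Sum>c\<in>allC. EE (dims c) (mu c) r (resid Fi Gi Hi c X Z (Y c)))"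
  unfolding augL_def EE_def by (simp add: sum.distrib sum_distrib_left)

lemma Xstep:
  fixes n p q s :: nat and ff xa d :: "nat \<Rightarrow> real" and Fi :: "nat \<Rightarrow> (nat \<Rightarrow> real) \<Rightarrow> real"
    and Gm Hm :: "nat \<Rightarrow> nat \<Rightarrow> real" and Ga Ha :: "nat \<Rightarrow> real" and r :: real
    and Z :: "nat \<Rightarrow> real" and Y mu :: "cls \<Rightarrow> nat \<Rightarrow> real" and sa sb na nb :: real
  defines "phi \<equiv> (\<lambda>x. augL n ff (cdim n p q s) (\<lambda>x j. Fi j x) (affmap n Gm Ga) (affmap n Hm Ha) r x Z Y mu)"
  defines "xb \<equiv> (\<lambda>j. xa j + d j)"
  assumes quad: "\<forall>j<p. quad_form n (Fi j)"
    and r0: "0 \<le> r"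
    and opt: "\<And>t. 0 < t \<Longrightarrow> t \<le> 1 \<Longrightarrow> phi xa + sa * na + sb / 2 * nb
        \<le> phi (\<lambda>j. xa j + t * d j) + sa * ((1 - t) * na) + sb / 2 * ((1 - t)^2 * nb)"
  shows "phi xb - phi xa \<ge> sa * na + sb * nb + r * sqn n d
     + ip p (\<lambda>j. mu CF j + r * (Fi j xa + Y CF j)) (\<lambda>j. Fi j xb - Fi j xa - dirderiv (Fi j) xa d)
     + r / 2 * (sqn p (\<lambda>j. Fi j xa - Fi j xb) + sqn q (\<lambda>j. \<Sum>t<n. Gm j t * d t)
                 + 2 * sqn s (\<lambda>j. \<Sum>t<n. Hm j t * d t))"
proof -
  define dims where "dims = cdim n p q s"
  define Fv where "Fv = (\<lambda>x j. Fi j x)"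
  define GG where "GG = affmap n Gm Ga"
  define HH where "HH = affmap n Hm Ha"
  define D where "D = (\<lambda>j. dirderiv (Fi j) xa d)"
  define Q where "Q = (\<lambda>j. Fi j xb - Fi j xa - D j)"
  define Gd where "Gd = (\<lambda>j. \<Sum>t<n. Gm j t * d t)"
  define Hd where "Hd = (\<lambda>j. \<Sum>t<n. Hm j t * d t)"
  define R1 where "R1 = (\<lambda>c. case c of PX \<Rightarrow> d | NX \<Rightarrow> (\<lambda>j. - d j) | CF \<Rightarrow> D | CG \<Rightarrow> Gd
       | PH \<Rightarrow> Hd | NH \<Rightarrow> (\<lambda>j. - Hd j))"
  define R2 where "R2 = (\<lambda>c. if c = CF then Q else (\<lambda>_::nat. 0::real))"
  define xt where "xt = (\<lambda>t::real. \<lambda>j. xa j + t * d j)"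
  define rr where "rr = (\<lambda>c x. resid Fv GG HH c x Z (Y c))"
  define w where "w = (\<lambda>c j. mu c j + r * rr c xa j)"
  have aff: "\<And>A b t j. affmap n A b (xt t) j = affmap n A b xa j + t * (\<Sum>t<n. A j t * d t)"
    unfolding affmap_def xt_def by (simp add: algebra_simps sum.distrib sum_distrib_left)
  have Fl: "\<And>t j. j < p \<Longrightarrow> Fi j (xt t) = Fi j xa + t * D j + t^2 * Q j"
    unfolding xt_def D_def Q_def xb_def using quad quad_line by blast
  have resl: "\<And>c t j. j < dims c \<Longrightarrow> rr c (xt t) j = rr c xa j + t * R1 c j + t^2 * R2 c j"
  proof -
    fix c t j assume j: "j < dims c"
    show "rr c (xt t) j = rr c xa j + t * R1 c j + t^2 * R2 c j"
    proof (cases c)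
      case CF then show ?thesis using j Fl by (simp add: rr_def R1_def R2_def dims_def Fv_def)
    qed (simp_all add: rr_def R1_def R2_def dims_def Fv_def GG_def HH_def aff Gd_def Hd_def,
         (simp_all add: xt_def algebra_simps)?)
  qed
  have EEl: "\<And>c t. EE (dims c) (mu c) r (rr c (xt t)) - EE (dims c) (mu c) r (rr c xa)
      = t * ip (dims c) (w c) (R1 c) + t^2 * (ip (dims c) (w c) (R2 c) + r / 2 * sqn (dims c) (\<lambda>j. R1 c j + t * R2 c j))"
    unfolding w_def by (rule EE_line) (rule resl)
  have phiE: "\<And>x. phi x = ip n ff x + (\<Sum>c\<in>allC. EE (dims c) (mu c) r (rr c x))"
    unfolding phi_def augL_EE dims_def rr_def Fv_def GG_def HH_def ..
  define A where "A = ip n ff d + (\<Sum>c\<in>allC. ip (dims c) (w c) (R1 c))"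
  define CC where "CC = (\<lambda>t. \<Sum>c\<in>allC. ip (dims c) (w c) (R2 c) + r / 2 * sqn (dims c) (\<lambda>j. R1 c j + t * R2 c j))"
  have f0l: "\<And>t. ip n ff (xt t) = ip n ff xa + t * ip n ff d"
    by (rule ip_line) (simp add: xt_def)
  have expand: "\<And>t. phi (xt t) - phi xa = t * A + t^2 * CC t"
  proof -
    fix t
    have "phi (xt t) - phi xa = t * ip n ff d + (\<Sum>c\<in>allC. EE (dims c) (mu c) r (rr c (xt t)) - EE (dims c) (mu c) r (rr c xa))"
      unfolding phiE f0l by (simp add: sum_subtractf)
    also have "\<dots> = t * A + t^2 * CC t"
      unfolding EEl A_def CC_def by (simp add: sum.distrib sum_distrib_left algebra_simps)
    finally show "phi (xt t) - phi xa = t * A + t^2 * CC t" .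
  qed
  define Cb where "Cb = (\<Sum>c\<in>allC. ip (dims c) (w c) (R2 c) + r / 2 * (2 * sqn (dims c) (R1 c) + 2 * sqn (dims c) (R2 c)))"
  have bound: "\<And>t. 0 \<le> t \<Longrightarrow> t \<le> 1 \<Longrightarrow> CC t \<le> Cb"
    unfolding CC_def Cb_def
    by (intro sum_mono add_left_mono mult_left_mono sqn_bound) (use r0 in auto)
  have K: "0 \<le> A - sa * na - sb * nb"
  proof (rule poly_lemma[where C = "Cb + sb / 2 * nb"])
    fix t :: real assume t: "0 < t" "t \<le> 1"
    have o: "phi xa + sa * na + sb / 2 * nb \<le> phi (xt t) + sa * ((1 - t) * na) + sb / 2 * ((1 - t)^2 * nb)"
      using opt[OF t] unfolding xt_def .
    have "t^2 * CC t \<le> t^2 * Cb" using bound[of t] t by (intro mult_left_mono) auto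
    moreover have "sb / 2 * ((1 - t)^2 * nb) = sb / 2 * nb - t * (sb * nb) + t^2 * (sb / 2 * nb)"
      by (simp add: power2_eq_square algebra_simps)
    moreover have "t * (A - sa * na - sb * nb) + t^2 * (Cb + sb / 2 * nb)
        = t * A - t * (sa * na) - t * (sb * nb) + t^2 * Cb + t^2 * (sb / 2 * nb)"
      by (simp add: algebra_simps)
    moreover have "sa * ((1 - t) * na) = sa * na - t * (sa * na)" by (simp add: algebra_simps)
    ultimately show "0 \<le> t * (A - sa * na - sb * nb) + t^2 * (Cb + sb / 2 * nb)"
      using o expand[of t] by linarith
  qed
  have x1e: "xt 1 = xb" unfolding xt_def xb_def by simp
  have at1: "phi xb - phi xa = A + CC 1" using expand[of 1] x1e by simp
  have sF: "sqn p (\<lambda>j. D j + Q j) = sqn p (\<lambda>j. Fi j xa - Fi j xb)"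
    unfolding Q_def sqn_def ip_def by (intro sum.cong) (auto simp: algebra_simps)
  have CC1: "CC 1 = ip p (\<lambda>j. mu CF j + r * (Fi j xa + Y CF j)) Q
       + r / 2 * (2 * sqn n d + sqn p (\<lambda>j. Fi j xa - Fi j xb) + sqn q Gd + 2 * sqn s Hd)"
    unfolding CC_def sum_allC
    by (simp add: R1_def R2_def ip_zero sqn_neg sF dims_def w_def rr_def Fv_def algebra_simps)
  show ?thesis using K at1 CC1 unfolding Q_def D_def Gd_def Hd_def by (simp add: algebra_simps)
qed


lemma Ystep:
  fixes d :: nat and m b Yo Yn :: "nat \<Rightarrow> real" and rr :: "(nat \<Rightarrow> real) \<Rightarrow> nat \<Rightarrow> real" and r g :: real
  assumes lin: "\<And>W j. j < d \<Longrightarrow> rr W j = b j + W j"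
    and opt: "\<And>t. 0 < t \<Longrightarrow> t \<le> 1 \<Longrightarrow>
       ip d m (rr Yn) + r / 2 * sqn d (rr Yn) + g / 2 * sqn d (vdiff Yn Yo)
       \<le> ip d m (rr (\<lambda>j. Yn j + t * (Yo j - Yn j))) + r / 2 * sqn d (rr (\<lambda>j. Yn j + t * (Yo j - Yn j)))
         + g / 2 * sqn d (vdiff (\<lambda>j. Yn j + t * (Yo j - Yn j)) Yo)"
  shows "EE d m r (rr Yo) - EE d m r (rr Yn) \<ge> (g + r / 2) * sqn d (vdiff Yn Yo)"
proof -
  define e where "e = (\<lambda>j. Yo j - Yn j)"
  define Wt where "Wt = (\<lambda>t::real. \<lambda>j. Yn j + t * e j)"
  define w where "w = (\<lambda>j. m j + r * rr Yn j)"
  define q where "q = (\<lambda>t. EE d m r (rr (Wt t)) + g / 2 * sqn d (vdiff (Wt t) Yo))"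
  have W0: "Wt 0 = Yn" unfolding Wt_def by simp
  have W1: "Wt 1 = Yo" unfolding Wt_def e_def by simp
  have E: "\<And>t. EE d m r (rr (Wt t)) - EE d m r (rr Yn) = t * ip d w e + t^2 * (ip d w (\<lambda>_. 0) + r / 2 * sqn d (\<lambda>j. e j + t * 0))"
    unfolding w_def by (rule EE_line) (simp add: lin Wt_def e_def)
  have S: "\<And>t. sqn d (vdiff (Wt t) Yo) = sqn d (vdiff Yn Yo) + t * (2 * ip d (vdiff Yn Yo) e) + t^2 * sqn d e"
    by (rule sqn_line) (simp add: Wt_def vdiff_def)
  have qe: "\<And>t. q t = q 0 + t * (ip d w e + g * ip d (vdiff Yn Yo) e) + t^2 * ((r / 2 + g / 2) * sqn d e)"
  proof -
    fix t
    have "q 0 = EE d m r (rr Yn) + g / 2 * sqn d (vdiff Yn Yo)" unfolding q_def W0 ..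
    then show "q t = q 0 + t * (ip d w e + g * ip d (vdiff Yn Yo) e) + t^2 * ((r / 2 + g / 2) * sqn d e)"
      using E[of t] S[of t] unfolding q_def by (simp add: ip_zero algebra_simps)
  qed
  have "q 0 + (r / 2 + g / 2) * sqn d e \<le> q 1"
  proof (rule qmin[OF qe])
    fix t :: real assume "0 < t" "t \<le> 1"
    from opt[OF this] show "q 0 \<le> q t" unfolding q_def W0 Wt_def e_def EE_def by simp
  qed
  moreover have "q 1 = EE d m r (rr Yo)" unfolding q_def W1 by (simp add: sqn_def ip_def vdiff_def)
  moreover have "q 0 = EE d m r (rr Yn) + g / 2 * sqn d (vdiff Yn Yo)" unfolding q_def W0 ..
  moreover have "sqn d e = sqn d (vdiff Yn Yo)" unfolding e_def using sqn_vdiff_sym[of d Yo Yn] by (simp add: vdiff_def)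
  ultimately show ?thesis by (simp add: algebra_simps)
qed

lemma Zstep:
  fixes n :: nat and I :: "nat set" and mP mN X YP YN :: "nat \<Rightarrow> nat \<Rightarrow> real" and r :: "nat \<Rightarrow> real"
    and tau :: real and Zo Zn :: "nat \<Rightarrow> real"
  defines "obj \<equiv> (\<lambda>W. \<Sum>i\<in>I. ip n (mP i) (\<lambda>j. X i j - W j + YP i j) + ip n (mN i) (\<lambda>j. W j - X i j + YN i j)
       + r i / 2 * (sqn n (\<lambda>j. X i j - W j + YP i j) + sqn n (\<lambda>j. W j - X i j + YN i j))
       + tau / 2 * sqn n (vdiff W Zo))"
  assumes opt: "\<And>t. 0 < t \<Longrightarrow> t \<le> 1 \<Longrightarrow> obj Zn \<le> obj (\<lambda>j. Zn j + t * (Zo j - Zn j))"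
  shows "(\<Sum>i\<in>I. EE n (mP i) (r i) (\<lambda>j. X i j - Zo j + YP i j) + EE n (mN i) (r i) (\<lambda>j. Zo j - X i j + YN i j))
       - (\<Sum>i\<in>I. EE n (mP i) (r i) (\<lambda>j. X i j - Zn j + YP i j) + EE n (mN i) (r i) (\<lambda>j. Zn j - X i j + YN i j))
       \<ge> (\<Sum>i\<in>I. (tau + r i) * sqn n (vdiff Zn Zo))"
proof -
  define e where "e = (\<lambda>j. Zo j - Zn j)"
  define Wt where "Wt = (\<lambda>t::real. \<lambda>j. Zn j + t * e j)"
  define g where "g = (\<lambda>i W. EE n (mP i) (r i) (\<lambda>j. X i j - W j + YP i j) + EE n (mN i) (r i) (\<lambda>j. W j - X i j + YN i j)
       + tau / 2 * sqn n (vdiff W Zo))"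
  define wP where "wP = (\<lambda>i j. mP i j + r i * (X i j - Zn j + YP i j))"
  define wN where "wN = (\<lambda>i j. mN i j + r i * (Zn j - X i j + YN i j))"
  define A where "A = (\<lambda>i. ip n (wP i) (\<lambda>j. - e j) + ip n (wN i) e + tau * ip n (vdiff Zn Zo) e)"
  define C where "C = (\<lambda>i. (r i + tau / 2) * sqn n e)"
  have objg: "\<And>W. obj W = (\<Sum>i\<in>I. g i W)" unfolding obj_def g_def EE_def by (simp add: algebra_simps)
  have gl: "\<And>i t. g i (Wt t) = g i Zn + t * A i + t^2 * C i"
  proof -
    fix i t
    have 1: "EE n (mP i) (r i) (\<lambda>j. X i j - Wt t j + YP i j) - EE n (mP i) (r i) (\<lambda>j. X i j - Zn j + YP i j)
       = t * ip n (wP i) (\<lambda>j. - e j) + t^2 * (ip n (wP i) (\<lambda>_. 0) + r i / 2 * sqn n (\<lambda>j. - e j + t * 0))"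
      unfolding wP_def by (rule EE_line) (simp add: Wt_def algebra_simps)
    have 2: "EE n (mN i) (r i) (\<lambda>j. Wt t j - X i j + YN i j) - EE n (mN i) (r i) (\<lambda>j. Zn j - X i j + YN i j)
       = t * ip n (wN i) e + t^2 * (ip n (wN i) (\<lambda>_. 0) + r i / 2 * sqn n (\<lambda>j. e j + t * 0))"
      unfolding wN_def by (rule EE_line) (simp add: Wt_def algebra_simps)
    have 3: "sqn n (vdiff (Wt t) Zo) = sqn n (vdiff Zn Zo) + t * (2 * ip n (vdiff Zn Zo) e) + t^2 * sqn n e"
      by (rule sqn_line) (simp add: Wt_def vdiff_def)
    have 4: "sqn n (\<lambda>j. - e j) = sqn n e" by (rule sqn_neg)
    show "g i (Wt t) = g i Zn + t * A i + t^2 * C i"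
      using 1 2 3 4 unfolding g_def A_def C_def by (simp add: ip_zero algebra_simps)
  qed
  define q where "q = (\<lambda>t. obj (Wt t))"
  have W0: "Wt 0 = Zn" unfolding Wt_def by simp
  have W1: "Wt 1 = Zo" unfolding Wt_def e_def by simp
  have qe: "\<And>t. q t = q 0 + t * (\<Sum>i\<in>I. A i) + t^2 * (\<Sum>i\<in>I. C i)"
    unfolding q_def objg gl W0 by (simp add: sum.distrib sum_distrib_left)
  have "q 0 + (\<Sum>i\<in>I. C i) \<le> q 1"
  proof (rule qmin[OF qe])
    fix t :: real assume "0 < t" "t \<le> 1"
    from opt[OF this] show "q 0 \<le> q t" unfolding q_def W0 Wt_def e_def by simp
  qed
  moreover have "q 1 = (\<Sum>i\<in>I. EE n (mP i) (r i) (\<lambda>j. X i j - Zo j + YP i j) + EE n (mN i) (r i) (\<lambda>j. Zo j - X i j + YN i j))"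
    unfolding q_def W1 objg g_def by (simp add: sqn_def ip_def vdiff_def)
  moreover have "q 0 = (\<Sum>i\<in>I. EE n (mP i) (r i) (\<lambda>j. X i j - Zn j + YP i j) + EE n (mN i) (r i) (\<lambda>j. Zn j - X i j + YN i j))
      + (\<Sum>i\<in>I. tau / 2 * sqn n (vdiff Zn Zo))"
    unfolding q_def W0 objg g_def by (simp add: sum.distrib)
  moreover have "sqn n e = sqn n (vdiff Zn Zo)" unfolding e_def using sqn_vdiff_sym[of n Zo Zn] by (simp add: vdiff_def)
  moreover have "(\<Sum>i\<in>I. (tau + r i) * sqn n (vdiff Zn Zo)) = (\<Sum>i\<in>I. tau / 2 * sqn n (vdiff Zn Zo)) + (\<Sum>i\<in>I. C i)"
    unfolding C_def \<open>sqn n e = sqn n (vdiff Zn Zo)\<close> sum.distrib[symmetric] by (intro sum.cong) (auto simp: algebra_simps)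
  ultimately show ?thesis by linarith
qed


lemma sum_restr:
  fixes f :: "nat \<Rightarrow> real" and n :: nat
  assumes "B \<subseteq> {..<n}"
  shows "(\<Sum>j<n. (if j \<in> B then f j else 0)) = (\<Sum>j\<in>B. f j)"
proof -
  have "(\<Sum>j<n. (if j \<in> B then f j else 0)) = (\<Sum>j\<in>{..<n} \<inter> B. f j)"
    using sum.inter_restrict[of "{..<n}" f B] by simp
  also have "{..<n} \<inter> B = B" using assms by blast
  finally show ?thesis .
qed

lemma sqn_restr:
  assumes "B \<subseteq> {..<n}"
  shows "sqn n (restr B (vdiff a b)) = sqn_on B (vdiff b a)"
proof -
  have "sqn n (restr B (vdiff a b)) = (\<Sum>j<n. (if j \<in> B then (vdiff b a j)^2 else 0))"
    unfolding sqn_def ip_def restr_def vdiff_def by (intro sum.cong) (auto simp: power2_eq_square algebra_simps)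
  also have "\<dots> = sqn_on B (vdiff b a)" unfolding sqn_on_def using sum_restr[OF assms] .
  finally show ?thesis .
qed

lemma blk_restr:
  assumes "B \<subseteq> {..<n}"
  shows "(\<lambda>j. \<Sum>t<n. A j t * restr B (vdiff a b) t) = (\<lambda>j. - blockmap A B (vdiff b a) j)"
proof
  fix j
  have "(\<Sum>t<n. A j t * restr B (vdiff a b) t) = (\<Sum>t<n. (if t \<in> B then - (A j t * vdiff b a t) else 0))"
    unfolding restr_def vdiff_def by (intro sum.cong) (auto simp: algebra_simps)
  also have "\<dots> = (\<Sum>t\<in>B. - (A j t * vdiff b a t))" using sum_restr[OF assms] .
  finally show "(\<Sum>t<n. A j t * restr B (vdiff a b) t) = - blockmap A B (vdiff b a) j"
    unfolding blockmap_def by (simp add: sum_negf)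
qed

lemma sqn_on_union:
  assumes sub: "\<forall>l\<in>{1..M}. B l \<subseteq> {..<n}"
    and cover: "(\<Union>l\<in>{1..M}. B l) = {..<n}"
    and disj: "\<forall>l\<in>{1..M}. \<forall>l'\<in>{1..M}. l \<noteq> l' \<longrightarrow> B l \<inter> B l' = {}"
  shows "(\<Sum>l\<in>{1..M::nat}. sqn_on (B l) v) = sqn n v"
proof -
  have fin: "\<forall>l\<in>{1..M}. finite (B l)" using sub finite_subset by blast
  have "sqn n v = (\<Sum>j\<in>(\<Union>l\<in>{1..M}. B l). (v j)^2)" unfolding cover sqn_def ip_def by (simp add: power2_eq_square)
  also have "\<dots> = (\<Sum>l\<in>{1..M}. \<Sum>j\<in>B l. (v j)^2)" by (rule sum.UNION_disjoint) (use fin disj in auto)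
  finally show ?thesis unfolding sqn_on_def by simp
qed

lemma augL_cong:
  assumes xy: "\<And>j. j < n \<Longrightarrow> x j = y j"
    and Fq: "\<forall>j<p. quad_form n (Fi j)"
  shows "augL n f0 (cdim n p q s) (\<lambda>x j. Fi j x) (affmap n Gm G0) (affmap n Hm H0) r x Z Y mu
       = augL n f0 (cdim n p q s) (\<lambda>x j. Fi j x) (affmap n Gm G0) (affmap n Hm H0) r y Z Y mu"
proof -
  have F: "\<And>j. j < p \<Longrightarrow> Fi j x = Fi j y" using Fq quad_cong xy by blast
  have A: "\<And>A b. affmap n A b x = affmap n A b y" unfolding affmap_def using xy by simp
  have c: "\<And>c. EE (cdim n p q s c) (mu c) r (resid (\<lambda>x j. Fi j x) (affmap n Gm G0) (affmap n Hm H0) c x Z (Y c))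
     = EE (cdim n p q s c) (mu c) r (resid (\<lambda>x j. Fi j x) (affmap n Gm G0) (affmap n Hm H0) c y Z (Y c))"
  proof -
    fix c
    show "?thesis c" unfolding EE_def
      by (cases c; intro arg_cong2[where f = "(+)"] arg_cong2[where f = "(*)"] ip_cong sqn_cong refl)
         (simp_all add: xy F A)
  qed
  have "ip n f0 x = ip n f0 y" by (rule ip_cong) (simp_all add: xy)
  then show ?thesis unfolding augL_EE using c by simp
qed

lemma ip_vdiff: "ip d (vdiff a b) v = ip d a v - ip d b v"
  unfolding ip_def vdiff_def by (simp add: algebra_simps sum_subtractf)

lemma augL_mu:
  "augL n f0 dims Fi Gi Hi r X Z Y mu' + (\<Sum>c\<in>allC. ip (dims c) (vdiff (mu c) (mu' c)) (resid Fi Gi Hi c X Z (Y c)))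
   = augL n f0 dims Fi Gi Hi r X Z Y mu"
  unfolding augL_def ip_vdiff by (simp add: sum_subtractf)


lemma conv_box:
  fixes a b x y t :: real
  assumes "a \<le> x" "x \<le> b" "a \<le> y" "y \<le> b" "0 \<le> t" "t \<le> 1"
  shows "a \<le> x + t * (y - x) \<and> x + t * (y - x) \<le> b"
proof (cases "x \<le> y")
  case True
  then have "t * (y - x) \<le> y - x" "0 \<le> t * (y - x)" using assms by (auto intro: mult_left_le_one_le)
  then show ?thesis using assms by linarith
next
  case False
  then have "t * (x - y) \<le> x - y" "0 \<le> t * (x - y)" using assms by (auto intro: mult_left_le_one_le)
  moreover have "t * (y - x) = - (t * (x - y))" by (simp add: algebra_simps)
  ultimately show ?thesis using assms by linarith
qed



theorem lemma1:
  fixes n N M :: nat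
    and u f0 :: "nat \<Rightarrow> real"
    and p q s :: "nat \<Rightarrow> nat"
    and F :: "nat \<Rightarrow> nat \<Rightarrow> (nat \<Rightarrow> real) \<Rightarrow> real"
    and Gm Hm :: "nat \<Rightarrow> nat \<Rightarrow> nat \<Rightarrow> real"
    and G0 H0 :: "nat \<Rightarrow> nat \<Rightarrow> real"
    and B :: "nat \<Rightarrow> nat set"
    and uY :: "nat \<Rightarrow> cls \<Rightarrow> nat \<Rightarrow> real"
    and rho :: "nat \<Rightarrow> real"
    and sig1 sig2 :: "nat \<Rightarrow> nat \<Rightarrow> nat \<Rightarrow> real"
    and tau :: "nat \<Rightarrow> real"
    and gam :: "nat \<Rightarrow> nat \<Rightarrow> cls \<Rightarrow> real"
    and mu Y :: "nat \<Rightarrow> nat \<Rightarrow> cls \<Rightarrow> nat \<Rightarrow> real"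
    and X :: "nat \<Rightarrow> nat \<Rightarrow> nat \<Rightarrow> real"
    and Z :: "nat \<Rightarrow> nat \<Rightarrow> real"
    and k :: nat
  assumes u_pos: "\<forall>j<n. 0 < u j"
    and F_quad: "\<forall>i\<in>{1..N}. \<forall>j<p i. quad_form n (F i j) \<and> convex_on_box n u (F i j)"
    and B_sub: "\<forall>l\<in>{1..M}. B l \<subseteq> {..<n}"
    and B_cover: "(\<Union>l\<in>{1..M}. B l) = {..<n}"
    and B_disj: "\<forall>l\<in>{1..M}. \<forall>l'\<in>{1..M}. l \<noteq> l' \<longrightarrow> B l \<inter> B l' = {}"
    and uY_pos: "\<forall>i\<in>{1..N}. \<forall>c\<in>allC. \<forall>j<cdim n (p i) (q i) (s i) c. 0 < uY i c j"
    and rho_pos: "\<forall>i\<in>{1..N}. 0 < rho i"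
    and sig1_nn: "\<forall>k'. \<forall>i\<in>{1..N}. \<forall>l\<in>{1..M}. 0 \<le> sig1 k' i l"
    and sig2_pos: "\<forall>k'. \<forall>i\<in>{1..N}. \<forall>l\<in>{1..M}. 0 < sig2 k' i l"
    and tau_pos: "\<forall>k'. 0 < tau k'"
    and gam_pos: "\<forall>k'. \<forall>i\<in>{1..N}. \<forall>c\<in>allC. 0 < gam k' i c"
    and muF_nn: "\<forall>k'. \<forall>i\<in>{1..N}. \<forall>j<p i. 0 \<le> mu k' i CF j"
    and X0: "\<forall>i\<in>{1..N}. inbox n (\<lambda>j. - u j) u (X 0 i)"
    and Z0: "inbox n (\<lambda>j. - u j) u (Z 0)"
    and Y0: "\<forall>i\<in>{1..N}. \<forall>c\<in>allC. inbox (cdim n (p i) (q i) (s i) c) (\<lambda>_. 0) (uY i c) (Y 0 i c)"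
    and U1: "\<forall>k'. \<forall>i\<in>{1..N}. \<forall>l\<in>{1..M}.
      (let Li = (\<lambda>x. augL n f0 (cdim n (p i) (q i) (s i)) (\<lambda>x' j. F i j x')
                   (affmap n (Gm i) (G0 i)) (affmap n (Hm i) (H0 i)) (rho i)
                   x (Z k') (Y k' i) (mu k' i));
           obj = (\<lambda>V. Li (blk_upd B l (gs_prev B l (X (Suc k') i) (X k' i)) V)
                   + sig1 k' i l * norm1_on (B l) (vdiff V (X k' i))
                   + sig2 k' i l / 2 * sqn_on (B l) (vdiff V (X k' i)))
       in (\<forall>j\<in>B l. - u j \<le> X (Suc k') i j \<and> X (Suc k') i j \<le> u j) \<and>
          (\<forall>V. (\<forall>j\<in>B l. - u j \<le> V j \<and> V j \<le> u j) \<longrightarrow> obj (X (Suc k') i) \<le> obj V))"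
    and U2: "\<forall>k'.
      (let obj = (\<lambda>W. \<Sum>i\<in>{1..N}.
              ip n (mu k' i PX) (\<lambda>j. X (Suc k') i j - W j + Y k' i PX j)
            + ip n (mu k' i NX) (\<lambda>j. W j - X (Suc k') i j + Y k' i NX j)
            + rho i / 2 * (sqn n (\<lambda>j. X (Suc k') i j - W j + Y k' i PX j)
                           + sqn n (\<lambda>j. W j - X (Suc k') i j + Y k' i NX j))
            + tau k' / 2 * sqn n (vdiff W (Z k')))
       in inbox n (\<lambda>j. - u j) u (Z (Suc k')) \<and>
          (\<forall>W. inbox n (\<lambda>j. - u j) u W \<longrightarrow> obj (Z (Suc k')) \<le> obj W))"
    and U3: "\<forall>k'. \<forall>i\<in>{1..N}. \<forall>c\<in>allC.
      (let d = cdim n (p i) (q i) (s i) c;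
           r = (\<lambda>W. resid (\<lambda>x' j. F i j x') (affmap n (Gm i) (G0 i)) (affmap n (Hm i) (H0 i))
                      c (X (Suc k') i) (Z (Suc k')) W);
           obj = (\<lambda>W. ip d (mu k' i c) (r W) + rho i / 2 * sqn d (r W)
                      + gam k' i c / 2 * sqn d (vdiff W (Y k' i c)))
       in inbox d (\<lambda>_. 0) (uY i c) (Y (Suc k') i c) \<and>
          (\<forall>W. inbox d (\<lambda>_. 0) (uY i c) W \<longrightarrow> obj (Y (Suc k') i c) \<le> obj W))"
  shows
    "(let Fv = (\<lambda>i x' j. F i j x');
          Gv = (\<lambda>i. affmap n (Gm i) (G0 i));
          Hv = (\<lambda>i. affmap n (Hm i) (H0 i));
          dims = (\<lambda>i. cdim n (p i) (q i) (s i));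
          L = (\<lambda>k'. \<Sum>i\<in>{1..N}. augL n f0 (dims i) (Fv i) (Gv i) (Hv i) (rho i)
                                  (X k' i) (Z k') (Y k' i) (mu k' i));
          rnew = (\<lambda>i c. resid (Fv i) (Gv i) (Hv i) c (X (Suc k) i) (Z (Suc k)) (Y (Suc k) i c));
          D = (\<Sum>i\<in>{1..N}. \<Sum>c\<in>allC.
                 ip (dims i c) (vdiff (mu k i c) (mu (Suc k) i c)) (rnew i c));
          XS = (\<lambda>i l. gs_cur B l (X (Suc k) i) (X k i));
          XP = (\<lambda>i l. gs_prev B l (X (Suc k) i) (X k i));
          dX = (\<lambda>i. vdiff (X (Suc k) i) (X k i));
          P = (\<Sum>i\<in>{1..N}.
                 (\<Sum>l\<in>{1..M}. sig2 k i l * sqn_on (B l) (dX i))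
               + rho i * sqn n (dX i)
               + (tau k + rho i) * sqn n (vdiff (Z (Suc k)) (Z k))
               + (\<Sum>c\<in>allC. (gam k i c + rho i / 2) * sqn (dims i c) (vdiff (Y (Suc k) i c) (Y k i c)))
               + rho i / 2 * (\<Sum>l\<in>{1..M}.
                    sqn (p i) (vdiff (Fv i (XS i l)) (Fv i (XP i l)))
                  + sqn (q i) (blockmap (Gm i) (B l) (dX i))
                  + 2 * sqn (s i) (blockmap (Hm i) (B l) (dX i))));
          U = (\<lambda>i l. ip (p i)
                 (\<lambda>j. mu k i CF j + rho i * (F i j (XS i l) + Y k i CF j))
                 (\<lambda>j. F i j (XP i l) - F i j (XS i l)
                      - dirderiv (F i j) (XS i l) (restr (B l) (vdiff (X k i) (X (Suc k) i)))))
      in L k \<ge> L (Suc k) + D + P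
               + (\<Sum>i\<in>{1..N}. \<Sum>l\<in>{1..M}.
                    sig1 k i l * norm1_on (B l) (vdiff (X k i) (X (Suc k) i)) + U i l))"
proof -
  define XS where "XS = (\<lambda>i l. gs_cur B l (X (Suc k) i) (X k i))"
  define XP where "XP = (\<lambda>i l. gs_prev B l (X (Suc k) i) (X k i))"
  define dX where "dX = (\<lambda>i. vdiff (X (Suc k) i) (X k i))"
  define phi where "phi = (\<lambda>i x. augL n f0 (cdim n (p i) (q i) (s i)) (\<lambda>x' j. F i j x') (affmap n (Gm i) (G0 i))
      (affmap n (Hm i) (H0 i)) (rho i) x (Z k) (Y k i) (mu k i))"
  define UU where "UU = (\<lambda>i l. ip (p i) (\<lambda>j. mu k i CF j + rho i * (F i j (XS i l) + Y k i CF j))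
      (\<lambda>j. F i j (XP i l) - F i j (XS i l) - dirderiv (F i j) (XS i l) (restr (B l) (vdiff (X k i) (X (Suc k) i)))))"
  define PF where "PF = (\<lambda>i l. sqn (p i) (vdiff (\<lambda>j. F i j (XS i l)) (\<lambda>j. F i j (XP i l)))
      + sqn (q i) (blockmap (Gm i) (B l) (dX i)) + 2 * sqn (s i) (blockmap (Hm i) (B l) (dX i)))"
  define n1 where "n1 = (\<lambda>i l. norm1_on (B l) (vdiff (X k i) (X (Suc k) i)))"
  define Rl where "Rl = (\<lambda>i l. sig1 k i l * n1 i l + sig2 k i l * sqn_on (B l) (dX i) + rho i * sqn_on (B l) (dX i)
      + UU i l + rho i / 2 * PF i l)"
  have Xbox: "- u j \<le> X k' i j \<and> X k' i j \<le> u j" if hi: "i \<in> {1..N}" and hj: "j < n" for k' i j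
  proof (cases k')
    case 0 then show ?thesis using X0 hi hj unfolding inbox_def by auto
  next
    case (Suc k'')
    obtain l where l: "l \<in> {1..M}" "j \<in> B l" using B_cover hj by blast
    have "(let Li = (\<lambda>x. augL n f0 (cdim n (p i) (q i) (s i)) (\<lambda>x' j. F i j x')
                   (affmap n (Gm i) (G0 i)) (affmap n (Hm i) (H0 i)) (rho i)
                   x (Z k'') (Y k'' i) (mu k'' i));
           obj = (\<lambda>V. Li (blk_upd B l (gs_prev B l (X (Suc k'') i) (X k'' i)) V)
                   + sig1 k'' i l * norm1_on (B l) (vdiff V (X k'' i))
                   + sig2 k'' i l / 2 * sqn_on (B l) (vdiff V (X k'' i)))
       in (\<forall>j\<in>B l. - u j \<le> X (Suc k'') i j \<and> X (Suc k'') i j \<le> u j) \<and>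
          (\<forall>V. (\<forall>j\<in>B l. - u j \<le> V j \<and> V j \<le> u j) \<longrightarrow> obj (X (Suc k'') i) \<le> obj V))"
      using U1 hi l(1) by blast
    then show ?thesis using l(2) Suc unfolding Let_def by blast
  qed
  have Zbox: "inbox n (\<lambda>j. - u j) u (Z k')" for k'
  proof (cases k')
    case 0 then show ?thesis using Z0 by simp
  next
    case (Suc k'') then show ?thesis using U2 unfolding Let_def by blast
  qed
  have Ybox: "inbox (cdim n (p i) (q i) (s i) c) (\<lambda>_. 0) (uY i c) (Y k' i c)" if "i \<in> {1..N}" "c \<in> allC" for k' i c
  proof (cases k')
    case 0 then show ?thesis using Y0 that by simp
  next
    case (Suc k'') then show ?thesis using U3 that unfolding Let_def by blast
  qed
  have Xl: "Rl i l \<le> phi i (XP i l) - phi i (XS i l)" if i: "i \<in> {1..N}" and l: "l \<in> {1..M}" for i l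
  proof -
    define d where "d = restr (B l) (vdiff (X k i) (X (Suc k) i))"
    define V where "V = (\<lambda>t::real. \<lambda>j. X (Suc k) i j + t * (X k i j - X (Suc k) i j))"
    have Bl: "B l \<subseteq> {..<n}" using B_sub l by blast
    have notprev: "j \<notin> (\<Union>l'\<in>{1..<l}. B l')" if "j \<in> B l" for j
    proof
      assume "j \<in> (\<Union>l'\<in>{1..<l}. B l')"
      then obtain l' where "l' \<in> {1..<l}" "j \<in> B l'" by blast
      moreover then have "l' \<in> {1..M}" "l' \<noteq> l" using l by auto
      ultimately show False using B_disj l that by blast
    qed
    have notprev': "j \<notin> B l" if "j \<in> B x" "Suc 0 \<le> x" "x < l" for j x
      using notprev that by force
    have ins: "{1..l} = insert l {1..<l}" using l by auto
    have cur: "(\<Union>l'\<in>{1..l}. B l') = B l \<union> (\<Union>l'\<in>{1..<l}. B l')" unfolding ins by simp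
    have x1: "(\<lambda>j. XS i l j + d j) = XP i l"
      unfolding XS_def XP_def d_def gs_cur_def gs_prev_def restr_def vdiff_def cur
      using notprev' by (auto intro!: ext)
    have line: "blk_upd B l (gs_prev B l (X (Suc k) i) (X k i)) (V t) = (\<lambda>j. XS i l j + t * d j)" for t
      unfolding XS_def V_def d_def gs_cur_def gs_prev_def restr_def vdiff_def blk_upd_def cur
      using notprev' by (auto intro!: ext)
    have base: "blk_upd B l (gs_prev B l (X (Suc k) i) (X k i)) (X (Suc k) i) = XS i l"
      unfolding XS_def gs_cur_def gs_prev_def blk_upd_def cur
      by (auto intro!: ext)
    have dif: "V t j - X k i j = (t - 1) * (X k i j - X (Suc k) i j)" for t j
      unfolding V_def by (simp add: algebra_simps)
    have nn1: "norm1_on (B l) (vdiff (V t) (X k i)) = (1 - t) * n1 i l" if "t \<le> 1" for t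
      unfolding norm1_on_def n1_def vdiff_def dif sum_distrib_left abs_mult using that by simp
    have nn0: "norm1_on (B l) (vdiff (X (Suc k) i) (X k i)) = n1 i l"
      unfolding norm1_on_def n1_def vdiff_def by (simp add: abs_minus_commute)
    have sq1: "sqn_on (B l) (vdiff (V t) (X k i)) = (1 - t)^2 * sqn_on (B l) (dX i)" for t
      unfolding sqn_on_def dX_def vdiff_def dif sum_distrib_left
      by (intro sum.cong) (auto simp: power2_eq_square algebra_simps)
    have vbox: "\<forall>j\<in>B l. - u j \<le> V t j \<and> V t j \<le> u j" if "0 \<le> t" "t \<le> 1" for t
    proof
      fix j assume "j \<in> B l"
      then have "j < n" using Bl by blast
      then show "- u j \<le> V t j \<and> V t j \<le> u j"
        unfolding V_def using Xbox[OF i, of j k] Xbox[OF i, of j "Suc k"] that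
        by (intro conv_box) auto
    qed
    have "(let Li = (\<lambda>x. augL n f0 (cdim n (p i) (q i) (s i)) (\<lambda>x' j. F i j x')
                   (affmap n (Gm i) (G0 i)) (affmap n (Hm i) (H0 i)) (rho i)
                   x (Z k) (Y k i) (mu k i));
           obj = (\<lambda>V. Li (blk_upd B l (gs_prev B l (X (Suc k) i) (X k i)) V)
                   + sig1 k i l * norm1_on (B l) (vdiff V (X k i))
                   + sig2 k i l / 2 * sqn_on (B l) (vdiff V (X k i)))
       in (\<forall>j\<in>B l. - u j \<le> X (Suc k) i j \<and> X (Suc k) i j \<le> u j) \<and>
          (\<forall>V. (\<forall>j\<in>B l. - u j \<le> V j \<and> V j \<le> u j) \<longrightarrow> obj (X (Suc k) i) \<le> obj V))"
      using U1 i l by blast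
    then have U1l: "\<And>W. (\<forall>j\<in>B l. - u j \<le> W j \<and> W j \<le> u j) \<Longrightarrow>
        phi i (blk_upd B l (gs_prev B l (X (Suc k) i) (X k i)) (X (Suc k) i))
          + sig1 k i l * norm1_on (B l) (vdiff (X (Suc k) i) (X k i))
          + sig2 k i l / 2 * sqn_on (B l) (vdiff (X (Suc k) i) (X k i))
        \<le> phi i (blk_upd B l (gs_prev B l (X (Suc k) i) (X k i)) W)
          + sig1 k i l * norm1_on (B l) (vdiff W (X k i))
          + sig2 k i l / 2 * sqn_on (B l) (vdiff W (X k i))"
      unfolding Let_def phi_def by blast
    have opt: "phi i (XS i l) + sig1 k i l * n1 i l + sig2 k i l / 2 * sqn_on (B l) (dX i)
        \<le> phi i (\<lambda>j. XS i l j + t * d j) + sig1 k i l * ((1 - t) * n1 i l)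
           + sig2 k i l / 2 * ((1 - t)^2 * sqn_on (B l) (dX i))" if "0 < t" "t \<le> 1" for t
      using U1l[OF vbox[of t]] that unfolding base line nn0 nn1[OF that(2)] sq1 dX_def by simp
    have quad: "\<forall>j<p i. quad_form n (F i j)" using F_quad i by blast
    have r0: "0 \<le> rho i" using rho_pos i by (simp add: less_imp_le)
    have main: "sig1 k i l * n1 i l + sig2 k i l * sqn_on (B l) (dX i) + rho i * sqn n d
     + ip (p i) (\<lambda>j. mu k i CF j + rho i * (F i j (XS i l) + Y k i CF j))
          (\<lambda>j. F i j (\<lambda>j. XS i l j + d j) - F i j (XS i l) - dirderiv (F i j) (XS i l) d)
     + rho i / 2 * (sqn (p i) (\<lambda>j. F i j (XS i l) - F i j (\<lambda>j. XS i l j + d j))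
                 + sqn (q i) (\<lambda>j. \<Sum>t<n. Gm i j t * d t)
                 + 2 * sqn (s i) (\<lambda>j. \<Sum>t<n. Hm i j t * d t))
      \<le> phi i (\<lambda>j. XS i l j + d j) - phi i (XS i l)"
      unfolding phi_def
      by (rule Xstep[where n=n and p="p i" and q="q i" and s="s i" and ff=f0 and xa="XS i l" and d=d
          and Fi="F i" and Gm="Gm i" and Hm="Hm i" and Ga="G0 i" and Ha="H0 i" and r="rho i"
          and Z="Z k" and Y="Y k i" and mu="mu k i" and sa="sig1 k i l" and sb="sig2 k i l"
          and na="n1 i l" and nb="sqn_on (B l) (dX i)", OF quad r0 opt[unfolded phi_def]])
    have e1: "sqn n d = sqn_on (B l) (dX i)" unfolding d_def dX_def by (rule sqn_restr[OF Bl])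
    have e2: "sqn (q i) (\<lambda>j. \<Sum>t<n. Gm i j t * d t) = sqn (q i) (blockmap (Gm i) (B l) (dX i))"
      unfolding d_def dX_def blk_restr[OF Bl] by (rule sqn_neg)
    have e3: "sqn (s i) (\<lambda>j. \<Sum>t<n. Hm i j t * d t) = sqn (s i) (blockmap (Hm i) (B l) (dX i))"
      unfolding d_def dX_def blk_restr[OF Bl] by (rule sqn_neg)
    note main' = main[unfolded x1 e1 e2 e3]
    show ?thesis using main' unfolding Rl_def UU_def PF_def d_def vdiff_def
      by (simp add: algebra_simps)
  qed
  have Xi: "(\<Sum>l\<in>{1..M}. Rl i l) \<le> phi i (X k i) - phi i (X (Suc k) i)" if i: "i \<in> {1..N}" for i
  proof -
    have "(\<Sum>l\<in>{1..M}. Rl i l) \<le> (\<Sum>l\<in>{1..M}. phi i (XP i l) - phi i (XS i l))"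
      by (intro sum_mono Xl[OF i]) auto
    also have "\<dots> = (\<Sum>l\<in>{1..M}. phi i (XP i l) - phi i (XP i (Suc l)))"
      unfolding XS_def XP_def gs_cur_def gs_prev_def by (simp add: atLeastLessThanSuc_atLeastAtMost)
    also have "\<dots> = phi i (XP i 1) - phi i (XP i (Suc M))"
    proof -
      have "(\<Sum>l = 1..M. phi i (XP i (Suc l)) - phi i (XP i l)) = phi i (XP i (Suc M)) - phi i (XP i 1)"
        by (rule sum_Suc_diff) simp
      then show ?thesis by (simp add: sum_subtractf)
    qed
    also have "XP i 1 = X k i" unfolding XP_def gs_prev_def by simp
    also have "phi i (XP i (Suc M)) = phi i (X (Suc k) i)"
    proof -
      have "\<And>j. j < n \<Longrightarrow> XP i (Suc M) j = X (Suc k) i j"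
        unfolding XP_def gs_prev_def using B_cover by (auto simp: atLeastLessThanSuc_atLeastAtMost)
      then show ?thesis unfolding phi_def
        by (rule augL_cong) (use F_quad i in simp_all)
    qed
    finally show ?thesis .
  qed
  have Zs: "(\<Sum>i\<in>{1..N}. EE n (mu k i PX) (rho i) (\<lambda>j. X (Suc k) i j - Z k j + Y k i PX j)
               + EE n (mu k i NX) (rho i) (\<lambda>j. Z k j - X (Suc k) i j + Y k i NX j))
       - (\<Sum>i\<in>{1..N}. EE n (mu k i PX) (rho i) (\<lambda>j. X (Suc k) i j - Z (Suc k) j + Y k i PX j)
               + EE n (mu k i NX) (rho i) (\<lambda>j. Z (Suc k) j - X (Suc k) i j + Y k i NX j))
       \<ge> (\<Sum>i\<in>{1..N}. (tau k + rho i) * sqn n (vdiff (Z (Suc k)) (Z k)))"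
  proof (rule Zstep[where I="{1..N}" and mP="\<lambda>i. mu k i PX" and mN="\<lambda>i. mu k i NX" and X="\<lambda>i. X (Suc k) i"
        and YP="\<lambda>i. Y k i PX" and YN="\<lambda>i. Y k i NX" and r=rho and tau="tau k" and Zo="Z k" and Zn="Z (Suc k)"])
    fix t :: real assume t: "0 < t" "t \<le> 1"
    have box: "inbox n (\<lambda>j. - u j) u (\<lambda>j. Z (Suc k) j + t * (Z k j - Z (Suc k) j))"
      unfolding inbox_def using Zbox[of k] Zbox[of "Suc k"] t unfolding inbox_def
      by (intro allI impI conv_box) auto
    show "(\<Sum>i\<in>{1..N}. ip n (mu k i PX) (\<lambda>j. X (Suc k) i j - Z (Suc k) j + Y k i PX j) + ip n (mu k i NX) (\<lambda>j. Z (Suc k) j - X (Suc k) i j + Y k i NX j)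
       + rho i / 2 * (sqn n (\<lambda>j. X (Suc k) i j - Z (Suc k) j + Y k i PX j) + sqn n (\<lambda>j. Z (Suc k) j - X (Suc k) i j + Y k i NX j))
       + tau k / 2 * sqn n (vdiff (Z (Suc k)) (Z k)))
      \<le> (\<Sum>i\<in>{1..N}. ip n (mu k i PX) (\<lambda>j. X (Suc k) i j - (Z (Suc k) j + t * (Z k j - Z (Suc k) j)) + Y k i PX j)
           + ip n (mu k i NX) (\<lambda>j. (Z (Suc k) j + t * (Z k j - Z (Suc k) j)) - X (Suc k) i j + Y k i NX j)
       + rho i / 2 * (sqn n (\<lambda>j. X (Suc k) i j - (Z (Suc k) j + t * (Z k j - Z (Suc k) j)) + Y k i PX j)
                    + sqn n (\<lambda>j. (Z (Suc k) j + t * (Z k j - Z (Suc k) j)) - X (Suc k) i j + Y k i NX j))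
       + tau k / 2 * sqn n (vdiff (\<lambda>j. Z (Suc k) j + t * (Z k j - Z (Suc k) j)) (Z k)))"
      using U2 box unfolding Let_def by blast
  qed
  have Ys: "EE (cdim n (p i) (q i) (s i) c) (mu k i c) (rho i)
              (resid (\<lambda>x' j. F i j x') (affmap n (Gm i) (G0 i)) (affmap n (Hm i) (H0 i)) c (X (Suc k) i) (Z (Suc k)) (Y k i c))
          - EE (cdim n (p i) (q i) (s i) c) (mu k i c) (rho i)
              (resid (\<lambda>x' j. F i j x') (affmap n (Gm i) (G0 i)) (affmap n (Hm i) (H0 i)) c (X (Suc k) i) (Z (Suc k)) (Y (Suc k) i c))
          \<ge> (gam k i c + rho i / 2) * sqn (cdim n (p i) (q i) (s i) c) (vdiff (Y (Suc k) i c) (Y k i c))"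
    if i: "i \<in> {1..N}" and c: "c \<in> allC" for i c
  proof (rule Ystep[where d="cdim n (p i) (q i) (s i) c" and m="mu k i c"
      and rr="\<lambda>W. resid (\<lambda>x' j. F i j x') (affmap n (Gm i) (G0 i)) (affmap n (Hm i) (H0 i)) c (X (Suc k) i) (Z (Suc k)) W"
      and b="resid (\<lambda>x' j. F i j x') (affmap n (Gm i) (G0 i)) (affmap n (Hm i) (H0 i)) c (X (Suc k) i) (Z (Suc k)) (\<lambda>_. 0)"
      and r="rho i" and g="gam k i c" and Yo="Y k i c" and Yn="Y (Suc k) i c"])
    fix W :: "nat \<Rightarrow> real" and j
    show "resid (\<lambda>x' j. F i j x') (affmap n (Gm i) (G0 i)) (affmap n (Hm i) (H0 i)) c (X (Suc k) i) (Z (Suc k)) W j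
        = resid (\<lambda>x' j. F i j x') (affmap n (Gm i) (G0 i)) (affmap n (Hm i) (H0 i)) c (X (Suc k) i) (Z (Suc k)) (\<lambda>_. 0) j + W j"
      by (cases c) simp_all
  next
    fix t :: real assume t: "0 < t" "t \<le> 1"
    have box: "inbox (cdim n (p i) (q i) (s i) c) (\<lambda>_. 0) (uY i c) (\<lambda>j. Y (Suc k) i c j + t * (Y k i c j - Y (Suc k) i c j))"
      using Ybox[OF i c, of k] Ybox[OF i c, of "Suc k"] t unfolding inbox_def
      by (intro allI impI conv_box) auto
    have "let d = cdim n (p i) (q i) (s i) c;
           r = (\<lambda>W. resid (\<lambda>x' j. F i j x') (affmap n (Gm i) (G0 i)) (affmap n (Hm i) (H0 i))
                      c (X (Suc k) i) (Z (Suc k)) W);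
           obj = (\<lambda>W. ip d (mu k i c) (r W) + rho i / 2 * sqn d (r W)
                      + gam k i c / 2 * sqn d (vdiff W (Y k i c)))
       in inbox d (\<lambda>_. 0) (uY i c) (Y (Suc k) i c) \<and>
          (\<forall>W. inbox d (\<lambda>_. 0) (uY i c) W \<longrightarrow> obj (Y (Suc k) i c) \<le> obj W)"
      using U3 i c by blast
    then show "ip (cdim n (p i) (q i) (s i) c) (mu k i c) (resid (\<lambda>x' j. F i j x') (affmap n (Gm i) (G0 i)) (affmap n (Hm i) (H0 i)) c (X (Suc k) i) (Z (Suc k)) (Y (Suc k) i c))
       + rho i / 2 * sqn (cdim n (p i) (q i) (s i) c) (resid (\<lambda>x' j. F i j x') (affmap n (Gm i) (G0 i)) (affmap n (Hm i) (H0 i)) c (X (Suc k) i) (Z (Suc k)) (Y (Suc k) i c))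
       + gam k i c / 2 * sqn (cdim n (p i) (q i) (s i) c) (vdiff (Y (Suc k) i c) (Y k i c))
       \<le> ip (cdim n (p i) (q i) (s i) c) (mu k i c) (resid (\<lambda>x' j. F i j x') (affmap n (Gm i) (G0 i)) (affmap n (Hm i) (H0 i)) c (X (Suc k) i) (Z (Suc k)) (\<lambda>j. Y (Suc k) i c j + t * (Y k i c j - Y (Suc k) i c j)))
       + rho i / 2 * sqn (cdim n (p i) (q i) (s i) c) (resid (\<lambda>x' j. F i j x') (affmap n (Gm i) (G0 i)) (affmap n (Hm i) (H0 i)) c (X (Suc k) i) (Z (Suc k)) (\<lambda>j. Y (Suc k) i c j + t * (Y k i c j - Y (Suc k) i c j)))
       + gam k i c / 2 * sqn (cdim n (p i) (q i) (s i) c) (vdiff (\<lambda>j. Y (Suc k) i c j + t * (Y k i c j - Y (Suc k) i c j)) (Y k i c))"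
      using box unfolding Let_def by blast
  qed
  define Lf where "Lf = (\<lambda>k'. \<Sum>i\<in>{1..N}. augL n f0 (cdim n (p i) (q i) (s i)) (\<lambda>x' j. F i j x')
      (affmap n (Gm i) (G0 i)) (affmap n (Hm i) (H0 i)) (rho i) (X k' i) (Z k') (Y k' i) (mu k' i))"
  define Dv where "Dv = (\<Sum>i\<in>{1..N}. \<Sum>c\<in>allC. ip (cdim n (p i) (q i) (s i) c) (vdiff (mu k i c) (mu (Suc k) i c))
      (resid (\<lambda>x' j. F i j x') (affmap n (Gm i) (G0 i)) (affmap n (Hm i) (H0 i)) c (X (Suc k) i) (Z (Suc k)) (Y (Suc k) i c)))"
  define Pv where "Pv = (\<Sum>i\<in>{1..N}. (\<Sum>l\<in>{1..M}. sig2 k i l * sqn_on (B l) (dX i))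
               + rho i * sqn n (dX i)
               + (tau k + rho i) * sqn n (vdiff (Z (Suc k)) (Z k))
               + (\<Sum>c\<in>allC. (gam k i c + rho i / 2) * sqn (cdim n (p i) (q i) (s i) c) (vdiff (Y (Suc k) i c) (Y k i c)))
               + rho i / 2 * (\<Sum>l\<in>{1..M}. PF i l))"
  define Sv where "Sv = (\<Sum>i\<in>{1..N}. \<Sum>l\<in>{1..M}. sig1 k i l * n1 i l + UU i l)"
  define AL2 where "AL2 = (\<lambda>i. augL n f0 (cdim n (p i) (q i) (s i)) (\<lambda>x' j. F i j x')
      (affmap n (Gm i) (G0 i)) (affmap n (Hm i) (H0 i)) (rho i) (X (Suc k) i) (Z (Suc k)) (Y (Suc k) i) (mu k i))"
  define ZP where "ZP = (\<lambda>i. EE n (mu k i PX) (rho i) (\<lambda>j. X (Suc k) i j - Z k j + Y k i PX j)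
               + EE n (mu k i NX) (rho i) (\<lambda>j. Z k j - X (Suc k) i j + Y k i NX j)
        - (EE n (mu k i PX) (rho i) (\<lambda>j. X (Suc k) i j - Z (Suc k) j + Y k i PX j)
               + EE n (mu k i NX) (rho i) (\<lambda>j. Z (Suc k) j - X (Suc k) i j + Y k i NX j)))"
  define YP where "YP = (\<lambda>i. \<Sum>c\<in>allC. EE (cdim n (p i) (q i) (s i) c) (mu k i c) (rho i)
              (resid (\<lambda>x' j. F i j x') (affmap n (Gm i) (G0 i)) (affmap n (Hm i) (H0 i)) c (X (Suc k) i) (Z (Suc k)) (Y k i c))
          - EE (cdim n (p i) (q i) (s i) c) (mu k i c) (rho i)
              (resid (\<lambda>x' j. F i j x') (affmap n (Gm i) (G0 i)) (affmap n (Hm i) (H0 i)) c (X (Suc k) i) (Z (Suc k)) (Y (Suc k) i c)))"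
  have LD: "Lf (Suc k) + Dv = (\<Sum>i\<in>{1..N}. AL2 i)"
    unfolding Lf_def Dv_def AL2_def by (simp add: sum.distrib[symmetric] augL_mu)
  have Lk: "Lf k = (\<Sum>i\<in>{1..N}. phi i (X k i))" unfolding Lf_def phi_def ..
  have dec: "phi i (X k i) - AL2 i = (phi i (X k i) - phi i (X (Suc k) i)) + ZP i + YP i" for i
    unfolding phi_def AL2_def ZP_def YP_def augL_EE sum_allC by simp
  have ZPs: "(\<Sum>i\<in>{1..N}. (tau k + rho i) * sqn n (vdiff (Z (Suc k)) (Z k))) \<le> (\<Sum>i\<in>{1..N}. ZP i)"
    using Zs unfolding ZP_def by (simp add: sum_subtractf)
  have YPs: "(\<Sum>i\<in>{1..N}. \<Sum>c\<in>allC. (gam k i c + rho i / 2) * sqn (cdim n (p i) (q i) (s i) c) (vdiff (Y (Suc k) i c) (Y k i c)))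
      \<le> (\<Sum>i\<in>{1..N}. YP i)"
    unfolding YP_def by (intro sum_mono) (use Ys in auto)
  have Xs: "(\<Sum>i\<in>{1..N}. \<Sum>l\<in>{1..M}. Rl i l) \<le> (\<Sum>i\<in>{1..N}. phi i (X k i) - phi i (X (Suc k) i))"
    by (intro sum_mono Xi)
  have Rsum: "(\<Sum>l\<in>{1..M}. Rl i l) = (\<Sum>l\<in>{1..M}. sig2 k i l * sqn_on (B l) (dX i)) + rho i * sqn n (dX i)
       + rho i / 2 * (\<Sum>l\<in>{1..M}. PF i l) + (\<Sum>l\<in>{1..M}. sig1 k i l * n1 i l + UU i l)" for i
  proof -
    have "(\<Sum>l\<in>{1..M}. sqn_on (B l) (dX i)) = sqn n (dX i)" by (rule sqn_on_union[OF B_sub B_cover B_disj])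
    moreover have "(\<Sum>l\<in>{1..M}. Rl i l) = (\<Sum>l\<in>{1..M}. sig2 k i l * sqn_on (B l) (dX i)) + (\<Sum>l\<in>{1..M}. rho i * sqn_on (B l) (dX i))
       + (\<Sum>l\<in>{1..M}. rho i / 2 * PF i l) + (\<Sum>l\<in>{1..M}. sig1 k i l * n1 i l + UU i l)"
      unfolding Rl_def sum.distrib[symmetric] by (intro sum.cong) (auto simp: algebra_simps)
    moreover have "(\<Sum>l\<in>{1..M}. rho i * sqn_on (B l) (dX i)) = rho i * (\<Sum>l\<in>{1..M}. sqn_on (B l) (dX i))"
      by (rule sum_distrib_left[symmetric])
    moreover have "(\<Sum>l\<in>{1..M}. rho i / 2 * PF i l) = rho i / 2 * (\<Sum>l\<in>{1..M}. PF i l)"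
      by (rule sum_distrib_left[symmetric])
    ultimately show ?thesis by simp
  qed
  have PS: "Pv + Sv = (\<Sum>i\<in>{1..N}. \<Sum>l\<in>{1..M}. Rl i l) + (\<Sum>i\<in>{1..N}. (tau k + rho i) * sqn n (vdiff (Z (Suc k)) (Z k)))
      + (\<Sum>i\<in>{1..N}. \<Sum>c\<in>allC. (gam k i c + rho i / 2) * sqn (cdim n (p i) (q i) (s i) c) (vdiff (Y (Suc k) i c) (Y k i c)))"
    unfolding Pv_def Sv_def Rsum sum.distrib[symmetric] by (intro sum.cong) (auto simp: algebra_simps)
  have tot: "Lf k - (Lf (Suc k) + Dv) = (\<Sum>i\<in>{1..N}. phi i (X k i) - phi i (X (Suc k) i)) + (\<Sum>i\<in>{1..N}. ZP i) + (\<Sum>i\<in>{1..N}. YP i)"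
    unfolding Lk LD sum_subtractf[symmetric] dec sum.distrib ..
  have fin: "Lf k \<ge> Lf (Suc k) + Dv + Pv + Sv"
    using tot PS Xs ZPs YPs by linarith
  show ?thesis unfolding Let_def using fin
    unfolding Lf_def Dv_def Pv_def Sv_def PF_def UU_def n1_def XS_def XP_def dX_def .
qed

end
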